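(* Let $(m_n)$ be a sequence of positive integers and let $V_n$ and $U_n$ be linear subspaces of $GF(2)^{m_n}$ with $U_n\subseteq V_n$ for every $n$. If the sequence $(U_n)$ has a uniform weight spectrum, then the sequence $(V_n)$ has a uniform weight spectrum.
   Context: The weight ${\rm wt}(x)$ of $x\in GF(2)^m$ is the number of nonzero coordinates; for $W\subseteq GF(2)^m$, $\mathcal{A}_i(W)=\{x\in W:{\rm wt}(x)=i\}$. For a linear subspace $V\subseteq GF(2)^m$ let $\alpha(V)=\max_{i,\,x}\frac{|\mathcal{A}_i(V+x)|}{|V|}$, the maximum over all $i\in\{0,\dots,m\}$ and $x\in GF(2)^m$. A sequence of subspaces $V_n\subseteq GF(2)^{m_n}$ has a uniform weight spectrum if $\alpha(V_n)\to 0$ as $n\to\infty$. *)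

theory Defs
  imports Complex_Main
begin

text \<open>Vectors of GF(2)^m are represented as functions nat => bool that vanish
  (are False) outside of {..<m}; True represents the field element 1.\<close>

definition gf2_vecs :: "nat \<Rightarrow> (nat \<Rightarrow> bool) set" where
  "gf2_vecs m = {x. \<forall>i. m \<le> i \<longrightarrow> \<not> x i}"

definition gf2_zero :: "nat \<Rightarrow> bool" where
  "gf2_zero = (\<lambda>i. False)"

definition gf2_add :: "(nat \<Rightarrow> bool) \<Rightarrow> (nat \<Rightarrow> bool) \<Rightarrow> (nat \<Rightarrow> bool)" where
  "gf2_add x y = (\<lambda>i. x i \<noteq> y i)"

definition wt :: "nat \<Rightarrow> (nat \<Rightarrow> bool) \<Rightarrow> nat" where
  "wt m x = card {i. i < m \<and> x i}"

text \<open>Linear subspace of GF(2)^m: contains 0 and is closed under addition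
  (scalar multiplication over GF(2) is trivial).\<close>
definition gf2_subspace :: "nat \<Rightarrow> (nat \<Rightarrow> bool) set \<Rightarrow> bool" where
  "gf2_subspace m V \<longleftrightarrow> V \<subseteq> gf2_vecs m \<and> gf2_zero \<in> V \<and>
     (\<forall>x\<in>V. \<forall>y\<in>V. gf2_add x y \<in> V)"

text \<open>A_i(V + x) has the same cardinality as {v in V. wt(v+x) = i}.\<close>
definition weight_class :: "nat \<Rightarrow> (nat \<Rightarrow> bool) set \<Rightarrow> (nat \<Rightarrow> bool) \<Rightarrow> nat \<Rightarrow> (nat \<Rightarrow> bool) set" where
  "weight_class m V x i = {y \<in> (\<lambda>v. gf2_add v x) ` V. wt m y = i}"

definition alpha :: "nat \<Rightarrow> (nat \<Rightarrow> bool) set \<Rightarrow> real" where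
  "alpha m V = Max {real (card (weight_class m V x i)) / real (card V) | i x.
                      i \<le> m \<and> x \<in> gf2_vecs m}"

definition uniform_weight_spectrum :: "(nat \<Rightarrow> nat) \<Rightarrow> (nat \<Rightarrow> (nat \<Rightarrow> bool) set) \<Rightarrow> bool" where
  "uniform_weight_spectrum m V \<longleftrightarrow> (\<lambda>n. alpha (m n) (V n)) \<longlonglongrightarrow> 0"

end

theory Submission
  imports Defs
begin

lemma finite_vecs: "finite (gf2_vecs m)"
proof -
  have "gf2_vecs m \<subseteq> (\<lambda>S i. i \<in> S) ` Pow {..<m}"
  proof
    fix x assume "x \<in> gf2_vecs m"
    hence "x = (\<lambda>i. i \<in> {i. i < m \<and> x i})" by (auto simp: gf2_vecs_def not_less[symmetric])
    moreover have "{i. i < m \<and> x i} \<in> Pow {..<m}" by auto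
    ultimately show "x \<in> (\<lambda>S i. i \<in> S) ` Pow {..<m}" by blast
  qed
  thus ?thesis by (rule finite_subset) auto
qed

lemma add_vecs: "x \<in> gf2_vecs m \<Longrightarrow> y \<in> gf2_vecs m \<Longrightarrow> gf2_add x y \<in> gf2_vecs m"
  by (auto simp: gf2_vecs_def gf2_add_def)

lemma add_add_cancel: "gf2_add (gf2_add w u) (gf2_add u x) = gf2_add w x"
  by (auto simp: gf2_add_def)

lemma add_assoc': "gf2_add u (gf2_add v x) = gf2_add (gf2_add v u) x"
  by (auto simp: gf2_add_def)

lemma add_swap: "gf2_add u (gf2_add v x) = gf2_add v (gf2_add u x)"
  by (auto simp: gf2_add_def)

lemma add_inj: "inj (\<lambda>v. gf2_add v x)"
  by (rule injI) (auto simp: gf2_add_def fun_eq_iff)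

definition cnt :: "nat \<Rightarrow> (nat \<Rightarrow> bool) set \<Rightarrow> (nat \<Rightarrow> bool) \<Rightarrow> nat \<Rightarrow> nat" where
  "cnt m V x i = card {v\<in>V. wt m (gf2_add v x) = i}"

lemma card_wc: "card (weight_class m V x i) = cnt m V x i"
proof -
  have "weight_class m V x i = (\<lambda>v. gf2_add v x) ` {v\<in>V. wt m (gf2_add v x) = i}"
    by (auto simp: weight_class_def)
  thus ?thesis unfolding cnt_def
    using card_image[OF inj_on_subset[OF add_inj subset_UNIV]] by simp
qed

lemma alpha_set_finite:
  "finite {real (card (weight_class m V x i)) / real (card V) | i x. i \<le> m \<and> x \<in> gf2_vecs m}"
  by (rule finite_image_set2) (use finite_vecs in auto)

lemma zero_vecs: "gf2_zero \<in> gf2_vecs m"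
  by (simp add: gf2_vecs_def gf2_zero_def)

lemma alpha_ge: "i \<le> m \<Longrightarrow> x \<in> gf2_vecs m \<Longrightarrow>
   real (card (weight_class m V x i)) / real (card V) \<le> alpha m V"
  unfolding alpha_def by (rule Max_ge[OF alpha_set_finite]) blast

lemma alpha_nonneg: "0 \<le> alpha m V"
proof -
  have "0 \<le> real (card (weight_class m V gf2_zero 0)) / real (card V)" by simp
  also have "\<dots> \<le> alpha m V" by (rule alpha_ge) (simp_all add: zero_vecs)
  finally show ?thesis .
qed

lemma cnt_bound:
  assumes "gf2_subspace m U" "x \<in> gf2_vecs m" "i \<le> m"
  shows "real (cnt m U x i) \<le> alpha m U * card U"
proof -
  have "U \<noteq> {}" using assms(1) unfolding gf2_subspace_def by auto
  moreover have "finite U" using assms(1) finite_vecs unfolding gf2_subspace_def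
    by (meson finite_subset)
  ultimately have "card U > 0" by auto
  with alpha_ge[OF assms(3,2), of U] show ?thesis by (simp add: card_wc field_simps)
qed

lemma cnt_le:
  assumes U: "gf2_subspace m U" and V: "gf2_subspace m V" and UV: "U \<subseteq> V"
    and x: "x \<in> gf2_vecs m" and i: "i \<le> m"
  shows "real (cnt m V x i) \<le> alpha m U * card V"
proof -
  have fU: "finite U" using U finite_vecs unfolding gf2_subspace_def by (meson finite_subset)
  have fV: "finite V" using V finite_vecs unfolding gf2_subspace_def by (meson finite_subset)
  have cU: "card U > 0" using U fU unfolding gf2_subspace_def by (auto simp: card_gt_0_iff)
  define P where "P v u \<longleftrightarrow> wt m (gf2_add u (gf2_add v x)) = i" for v u
  have "(\<Sum>v\<in>V. \<Sum>u\<in>U. (if P v u then 1 else 0::real)) = (\<Sum>u\<in>U. \<Sum>v\<in>V. (if P v u then 1 else 0))"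
    by (rule sum.swap)
  also have "\<dots> = (\<Sum>u\<in>U. real (cnt m V x i))"
  proof (rule sum.cong[OF refl])
    fix u assume u: "u \<in> U"
    hence uV: "u \<in> V" using UV by auto
    have "(\<Sum>v\<in>V. (if P v u then 1 else 0::real)) = real (card {v\<in>V. wt m (gf2_add v (gf2_add u x)) = i})"
      using fV by (simp add: sum.If_cases P_def add_swap[of u] Int_def)
    also have "{v\<in>V. wt m (gf2_add v (gf2_add u x)) = i} = (\<lambda>w. gf2_add w u) ` {w\<in>V. wt m (gf2_add w x) = i}"
    proof (rule set_eqI, rule iffI)
      fix v assume "v \<in> {v\<in>V. wt m (gf2_add v (gf2_add u x)) = i}"
      moreover have "gf2_add (gf2_add v u) x = gf2_add v (gf2_add u x)" by (auto simp: gf2_add_def)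
      ultimately have "gf2_add v u \<in> {w\<in>V. wt m (gf2_add w x) = i}"
        using V uV unfolding gf2_subspace_def by auto
      moreover have "v = gf2_add (gf2_add v u) u" by (auto simp: gf2_add_def)
      ultimately show "v \<in> (\<lambda>w. gf2_add w u) ` {w\<in>V. wt m (gf2_add w x) = i}" by blast
    next
      fix v assume "v \<in> (\<lambda>w. gf2_add w u) ` {w\<in>V. wt m (gf2_add w x) = i}"
      thus "v \<in> {v\<in>V. wt m (gf2_add v (gf2_add u x)) = i}"
        using V uV unfolding gf2_subspace_def by (auto simp: add_add_cancel)
    qed
    also have "card \<dots> = cnt m V x i" unfolding cnt_def
      by (rule card_image[OF inj_on_subset[OF add_inj subset_UNIV]])
    finally show "(\<Sum>v\<in>V. (if P v u then 1 else 0::real)) = real (cnt m V x i)" .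
  qed
  also have "\<dots> = card U * real (cnt m V x i)" by simp
  finally have eq: "card U * real (cnt m V x i) = (\<Sum>v\<in>V. \<Sum>u\<in>U. (if P v u then 1 else 0::real))" ..
  have "(\<Sum>v\<in>V. \<Sum>u\<in>U. (if P v u then 1 else 0::real)) \<le> (\<Sum>v\<in>V. alpha m U * card U)"
  proof (rule sum_mono)
    fix v assume v: "v \<in> V"
    have vx: "gf2_add v x \<in> gf2_vecs m" using V v x add_vecs unfolding gf2_subspace_def by blast
    have "(\<Sum>u\<in>U. (if P v u then 1 else 0::real)) = real (cnt m U (gf2_add v x) i)"
      using fU by (simp add: sum.If_cases P_def cnt_def Int_def)
    also have "\<dots> \<le> alpha m U * card U" by (rule cnt_bound[OF U vx i])
    finally show "(\<Sum>u\<in>U. (if P v u then 1 else 0::real)) \<le> alpha m U * card U" .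
  qed
  also have "\<dots> = card U * (alpha m U * card V)" by simp
  finally have "card U * real (cnt m V x i) \<le> card U * (alpha m U * card V)" using eq by simp
  thus ?thesis using cU by simp
qed

lemma alpha_mono:
  assumes U: "gf2_subspace m U" and V: "gf2_subspace m V" and UV: "U \<subseteq> V"
  shows "alpha m V \<le> alpha m U"
proof -
  have fV: "finite V" using V finite_vecs unfolding gf2_subspace_def by (meson finite_subset)
  have cV: "card V > 0" using V fV unfolding gf2_subspace_def by (auto simp: card_gt_0_iff)
  show ?thesis unfolding alpha_def[of m V]
  proof (subst Max_le_iff[OF alpha_set_finite])
    show "{real (card (weight_class m V x i)) / real (card V) | i x. i \<le> m \<and> x \<in> gf2_vecs m} \<noteq> {}"
      using zero_vecs by blast
    show "\<forall>a\<in>{real (card (weight_class m V x i)) / real (card V) | i x. i \<le> m \<and> x \<in> gf2_vecs m}. a \<le> alpha m U"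
    proof safe
      fix i x assume "i \<le> m" "x \<in> gf2_vecs m"
      from cnt_le[OF U V UV this(2,1)] cV
      show "real (card (weight_class m V x i)) / real (card V) \<le> alpha m U"
        by (simp add: card_wc field_simps)
    qed
  qed
qed

theorem proposition2:
  fixes m :: "nat \<Rightarrow> nat"
    and U V :: "nat \<Rightarrow> (nat \<Rightarrow> bool) set"
  assumes "\<And>n. 0 < m n"
    and "\<And>n. gf2_subspace (m n) (V n)"
    and "\<And>n. gf2_subspace (m n) (U n)"
    and "\<And>n. U n \<subseteq> V n"
    and "uniform_weight_spectrum m U"
  shows "uniform_weight_spectrum m V"
  unfolding uniform_weight_spectrum_def
proof (rule tendsto_sandwich[of "\<lambda>_. 0" _ _ "\<lambda>n. alpha (m n) (U n)"])
  show "\<forall>\<^sub>F n in sequentially. 0 \<le> alpha (m n) (V n)" by (simp add: alpha_nonneg)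
  show "\<forall>\<^sub>F n in sequentially. alpha (m n) (V n) \<le> alpha (m n) (U n)"
    using alpha_mono assms(2-4) by simp
  show "(\<lambda>n. 0::real) \<longlonglongrightarrow> 0" by simp
  show "(\<lambda>n. alpha (m n) (U n)) \<longlonglongrightarrow> 0" using assms(5) unfolding uniform_weight_spectrum_def .
qed

end
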